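(* Let $k\in\mathbb{N}$ and let $\psi$ be a complex-valued function on $T$. The following are equivalent: (a) $M_\psi$ is bounded on $\mathcal{L}^{(k)}$; (b) $M_\psi$ is bounded on $\mathcal{L}^{(k)}_0$; (c) $\psi\in L^\infty\cap \mathcal{L}^{(k+1)}$. Furthermore, under these conditions, the operator norm $\|M_\psi\|$ satisfies $$\max\{\|\psi\|_\infty,\|\psi\|_k\}\le \|M_\psi\|\le \|\psi\|_\infty+\sup_{v\in T^*}|v|\prod_{j=1}^{k}\ell_j(|v|)\,D\psi(v).$$
   Context: $T$ is a tree (locally finite, connected, simply connected graph, identified with its vertex set) without terminal vertices, rooted at a vertex $o$. For $v\in T$, $|v|$ is the number of edges of the path from $o$ to $v$; for $v\ne o$, $v^-$ denotes the neighbor of $v$ on the path from $o$ to $v$ (the parent of $v$). $T^*=T\setminus\{o\}$. For a function $f:T\to\mathbb{C}$ and $v\in T^*$, $Df(v)=|f(v)-f(v^-)|$. For $x\ge1$ define $\ell_0(x)=1$, $\ell_1(x)=1+\ln x$, and $\ell_j(x)=1+\ln\ell_{j-1}(x)$ for $j\ge2$. For $k\in\mathbb{N}$, $\mathcal{L}^{(k)}$ is the set of $f:T\to\mathbb{C}$ with $\sup_{v\in T^*}|v|\prod_{j=0}^{k-1}\ell_j(|v|)Df(v)<\infty$, with norm $\|f\|_k=|f(o)|+\sup_{v\in T^*}|v|\prod_{j=0}^{k-1}\ell_j(|v|)Df(v)$. $\mathcal{L}^{(k)}_0$ is the subspace of $f\in\mathcal{L}^{(k)}$ with $\lim_{|v|\to\infty}|v|\prod_{j=0}^{k-1}\ell_j(|v|)Df(v)=0$.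 $L^\infty$ is the space of bounded functions on $T$ with $\|f\|_\infty=\sup_{v\in T}|f(v)|$. $M_\psi f=\psi f$ is the multiplication operator with symbol $\psi$; $\|M_\psi\|$ denotes its operator norm on the space ($\mathcal{L}^{(k)}$ or $\mathcal{L}^{(k)}_0$) on which it acts. *)

theory Defs
  imports "HOL-Analysis.Analysis"
begin

text \<open>A rooted tree on the vertex type 'v (vertex set = UNIV), given by its root
  r and its parent map par (convention: par r = r).\<close>

definition neighbors :: "'v \<Rightarrow> ('v \<Rightarrow> 'v) \<Rightarrow> 'v \<Rightarrow> 'v set" where
  "neighbors r par v = {w. w \<noteq> r \<and> par w = v} \<union> (if v = r then {} else {par v})"

definition rooted_tree :: "'v \<Rightarrow> ('v \<Rightarrow> 'v) \<Rightarrow> bool" where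
  "rooted_tree r par \<longleftrightarrow>
     par r = r \<and>
     (\<forall>v. \<exists>n. (par ^^ n) v = r) \<and>
     (\<forall>v. finite (neighbors r par v)) \<and>
     (\<forall>v. card (neighbors r par v) \<noteq> 1)"

definition depth :: "'v \<Rightarrow> ('v \<Rightarrow> 'v) \<Rightarrow> 'v \<Rightarrow> nat" where
  "depth r par v = (LEAST n. (par ^^ n) v = r)"

fun ell :: "nat \<Rightarrow> real \<Rightarrow> real" where
  "ell 0 x = 1"
| "ell (Suc 0) x = 1 + ln x"
| "ell (Suc (Suc j)) x = 1 + ln (ell (Suc j) x)"

definition Dif :: "('v \<Rightarrow> 'v) \<Rightarrow> ('v \<Rightarrow> complex) \<Rightarrow> 'v \<Rightarrow> real" where
  "Dif par f v = cmod (f v - f (par v))"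

definition wdiff :: "'v \<Rightarrow> ('v \<Rightarrow> 'v) \<Rightarrow> nat \<Rightarrow> ('v \<Rightarrow> complex) \<Rightarrow> 'v \<Rightarrow> real" where
  "wdiff r par k f v =
     real (depth r par v) * (\<Prod>j<k. ell j (real (depth r par v))) * Dif par f v"

definition Lk :: "'v \<Rightarrow> ('v \<Rightarrow> 'v) \<Rightarrow> nat \<Rightarrow> ('v \<Rightarrow> complex) set" where
  "Lk r par k = {f. bdd_above (wdiff r par k f ` (UNIV - {r}))}"

text \<open>The supremum is taken over T* together with 0 (all values are nonnegative,
  so this only matters when T* is empty).\<close>
definition normk :: "'v \<Rightarrow> ('v \<Rightarrow> 'v) \<Rightarrow> nat \<Rightarrow> ('v \<Rightarrow> complex) \<Rightarrow> real" where
  "normk r par k f = cmod (f r) + Sup (insert 0 (wdiff r par k f ` (UNIV - {r})))"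

definition Lk0 :: "'v \<Rightarrow> ('v \<Rightarrow> 'v) \<Rightarrow> nat \<Rightarrow> ('v \<Rightarrow> complex) set" where
  "Lk0 r par k = {f \<in> Lk r par k.
      \<forall>\<epsilon>>0. \<exists>N. \<forall>v. v \<noteq> r \<and> depth r par v \<ge> N \<longrightarrow> wdiff r par k f v < \<epsilon>}"

definition Linf :: "('v \<Rightarrow> complex) set" where
  "Linf = {f. bounded (range f)}"

definition supnorm :: "('v \<Rightarrow> complex) \<Rightarrow> real" where
  "supnorm f = (SUP v. cmod (f v))"

definition mult_bounded_on :: "('v \<Rightarrow> complex) set \<Rightarrow> (('v \<Rightarrow> complex) \<Rightarrow> real)
    \<Rightarrow> ('v \<Rightarrow> complex) \<Rightarrow> bool" where
  "mult_bounded_on X N \<psi> \<longleftrightarrow>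
     (\<forall>f\<in>X. (\<lambda>v. \<psi> v * f v) \<in> X) \<and>
     (\<exists>C. \<forall>f\<in>X. N (\<lambda>v. \<psi> v * f v) \<le> C * N f)"

definition mult_opnorm :: "('v \<Rightarrow> complex) set \<Rightarrow> (('v \<Rightarrow> complex) \<Rightarrow> real)
    \<Rightarrow> ('v \<Rightarrow> complex) \<Rightarrow> real" where
  "mult_opnorm X N \<psi> = (SUP f\<in>X - {\<lambda>v. 0}. N (\<lambda>v. \<psi> v * f v) / N f)"

end

theory Submission
  imports Defs
begin

definition Pl :: "nat \<Rightarrow> real \<Rightarrow> real" where "Pl j x = (\<Prod>i<j. ell i x)"

lemma ell_0 [simp]: "ell j 0 = 1"
  by (induction j "0::real" rule: ell.induct) auto

lemma ell_1 [simp]: "ell j 1 = 1"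
  by (induction j "1::real" rule: ell.induct) auto

lemma ell_Suc: "j \<ge> 1 \<Longrightarrow> ell (Suc j) x = 1 + ln (ell j x)"
  by (cases j) auto

lemma ell_ge1: "x \<ge> 1 \<Longrightarrow> ell j x \<ge> 1"
  by (induction j x rule: ell.induct) auto

lemma ell_nat_ge1: "ell j (real n) \<ge> 1"
  by (cases "n = 0") (auto intro: ell_ge1)

lemma Pl_ge1: "x \<ge> 1 \<Longrightarrow> Pl j x \<ge> 1"
  unfolding Pl_def by (rule prod_ge_1) (auto intro: ell_ge1)

lemma Pl_nat_ge1: "Pl j (real n) \<ge> 1"
  unfolding Pl_def by (rule prod_ge_1) (auto intro: ell_nat_ge1)

lemma Pl_Suc: "Pl (Suc j) x = Pl j x * ell j x"
  unfolding Pl_def by simp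

lemma ln_diff_bounds:
  fixes a b :: real assumes "0 < a" "a \<le> b"
  shows "(b - a) / b \<le> ln b - ln a \<and> ln b - ln a \<le> (b - a) / a"
proof
  have "ln (a / b) \<le> a / b - 1" using assms by (intro ln_le_minus_one) auto
  moreover have "ln (a/b) = ln a - ln b" using assms by (simp add: ln_div)
  moreover have "a / b - 1 = - ((b - a) / b)" using assms by (simp add: field_simps)
  ultimately show "(b - a) / b \<le> ln b - ln a" by linarith
next
  have "ln (b / a) \<le> b / a - 1" using assms by (intro ln_le_minus_one) auto
  moreover have "ln (b/a) = ln b - ln a" using assms by (simp add: ln_div)
  moreover have "b / a - 1 = (b - a) / a" using assms by (simp add: field_simps)
  ultimately show "ln b - ln a \<le> (b - a) / a" by linarith
qed

lemma ell_diff: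
  assumes "1 \<le> x" "x \<le> y" "j \<ge> 1"
  shows "(y - x) / (y * Pl j y) \<le> ell j y - ell j x \<and> ell j y - ell j x \<le> (y - x) / (x * Pl j x)"
  using assms(3)
proof (induction j rule: dec_induct)
  case base
  have "(y - x) / y \<le> ln y - ln x \<and> ln y - ln x \<le> (y - x) / x"
    using assms by (intro ln_diff_bounds) auto
  then show ?case by (simp add: Pl_def)
next
  case (step j)
  define a where "a = ell j x"
  define b where "b = ell j y"
  have a1: "a \<ge> 1" unfolding a_def using assms by (intro ell_ge1) auto
  have pos: "x * Pl j x > 0" "y * Pl j y > 0" using Pl_ge1[of x j] Pl_ge1[of y j] assms
    by (auto intro!: mult_pos_pos)
  have lo: "(y - x) / (y * Pl j y) \<le> b - a" and up: "b - a \<le> (y - x) / (x * Pl j x)"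
    using step.IH unfolding a_def b_def by auto
  have "0 \<le> (y - x) / (y * Pl j y)" using pos assms by auto
  hence ab: "a \<le> b" using lo by linarith
  have L: "(b - a) / b \<le> ln b - ln a \<and> ln b - ln a \<le> (b - a) / a"
    using a1 ab by (intro ln_diff_bounds) auto
  have e: "ell (Suc j) y - ell (Suc j) x = ln b - ln a"
    using step.hyps unfolding a_def b_def by (simp add: ell_Suc)
  have "(y - x) / (y * Pl (Suc j) y) = ((y - x) / (y * Pl j y)) / b"
    by (simp add: Pl_Suc b_def mult.assoc)
  also have "\<dots> \<le> (b - a) / b" using lo a1 ab by (intro divide_right_mono) auto
  finally have 1: "(y - x) / (y * Pl (Suc j) y) \<le> ell (Suc j) y - ell (Suc j) x" using L e by linarith
  have "(b - a) / a \<le> ((y - x) / (x * Pl j x)) / a" using up a1 by (intro divide_right_mono) auto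
  also have "\<dots> = (y - x) / (x * Pl (Suc j) x)" by (simp add: Pl_Suc a_def mult.assoc)
  finally have 2: "ell (Suc j) y - ell (Suc j) x \<le> (y - x) / (x * Pl (Suc j) x)" using L e by linarith
  show ?case using 1 2 by blast
qed

lemma ell_mono: assumes "1 \<le> x" "x \<le> y" shows "ell j x \<le> ell j y"
proof (cases "j = 0")
  case False
  have "0 \<le> (y - x) / (y * Pl j y)" using Pl_ge1[of y j] assms by auto
  then show ?thesis using ell_diff[OF assms, of j] False by linarith
qed simp

lemma ell_mono_nat: "m \<le> n \<Longrightarrow> ell j (real m) \<le> ell j (real n)"
  by (cases "m = 0") (auto intro!: ell_mono simp: ell_nat_ge1[of j n, simplified])

lemma ell_unbounded: "j \<ge> 1 \<Longrightarrow> \<exists>x\<ge>1. ell j x \<ge> M"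
proof (induction j arbitrary: M rule: dec_induct)
  case base
  show ?case by (rule exI[of _ "exp (max M 1)"]) auto
next
  case (step j)
  obtain x where "x \<ge> 1" "ell j x \<ge> exp M" using step.IH by blast
  moreover have "ln (exp M) \<le> ln (ell j x)" using calculation(2) by (subst ln_le_cancel_iff) (auto intro: less_le_trans[OF exp_gt_zero])
  ultimately show ?case using step.hyps by (auto simp: ell_Suc intro!: exI[of _ x])
qed

lemma ell_unbounded_nat: assumes "j \<ge> 1" shows "\<exists>N. \<forall>n\<ge>N. ell j (real n) \<ge> M"
proof -
  obtain x where x: "x \<ge> 1" "ell j x \<ge> M" using ell_unbounded[OF assms] by blast
  show ?thesis
  proof (intro exI allI impI)
    fix n assume "nat \<lceil>x\<rceil> \<le> n"
    hence "x \<le> real n" by linarith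
    thus "M \<le> ell j (real n)" using x ell_mono[of x "real n" j] by linarith
  qed
qed

lemma ell_step_lower: assumes "n \<ge> 1" "j \<ge> 1"
  shows "1 / (real (Suc n) * Pl j (real (Suc n))) \<le> ell j (real (Suc n)) - ell j (real n)"
  using ell_diff[of "real n" "real (Suc n)" j] assms by auto

lemma ell_step_upper: assumes "n \<ge> 1"
  shows "ell j (real (Suc n)) - ell j (real n) \<le> 1 / (real n * Pl j (real n))"
  using ell_diff[of "real n" "real (Suc n)" j] assms by (cases "j = 0") (auto simp: Pl_def)

lemma ell_step_le2: assumes "n \<ge> 1"
  shows "ell j (real (Suc n)) \<le> 2 * ell j (real n)"
proof -
  have "1 * 1 \<le> real n * Pl j (real n)"
    using Pl_nat_ge1[of j n] assms by (intro mult_mono) auto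
  hence "1 / (real n * Pl j (real n)) \<le> 1" by simp
  thus ?thesis using ell_step_upper[OF assms, of j] ell_ge1[of "real n" j] assms by linarith
qed

lemma Pl_step_le: assumes "n \<ge> 1"
  shows "Pl j (real (Suc n)) \<le> 2 ^ j * Pl j (real n)"
proof -
  have "Pl j (real (Suc n)) \<le> (\<Prod>i<j. 2 * ell i (real n))"
    unfolding Pl_def
  proof (intro prod_mono conjI)
    fix i show "0 \<le> ell i (real (Suc n))" using ell_nat_ge1[of i "Suc n"] by linarith
    show "ell i (real (Suc n)) \<le> 2 * ell i (real n)" by (rule ell_step_le2[OF assms])
  qed
  also have "\<dots> = 2 ^ j * Pl j (real n)" by (simp add: prod.distrib Pl_def)
  finally show ?thesis .
qed


locale rt =
  fixes r :: 'v and par :: "'v \<Rightarrow> 'v"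
  assumes par_r: "par r = r" and reach: "\<forall>v. \<exists>n. (par ^^ n) v = r"
begin

abbreviation dep where "dep \<equiv> depth r par"

lemma dep_r [simp]: "dep r = 0"
  unfolding depth_def by (rule Least_eq_0) simp

lemma dep_reach: "(par ^^ dep v) v = r"
  unfolding depth_def using reach by (meson LeastI)

lemma dep_par: assumes "v \<noteq> r" shows "dep v = Suc (dep (par v))"
proof -
  have "dep v \<noteq> 0" using dep_reach[of v] assms by (metis funpow_0)
  then obtain m where m: "dep v = Suc m" by (cases "dep v") auto
  have "(par ^^ m) (par v) = r" using dep_reach[of v] m by (simp add: funpow_Suc_right del: funpow.simps)
  hence le: "dep (par v) \<le> m" unfolding depth_def by (rule Least_le)
  have "(par ^^ Suc (dep (par v))) v = r" using dep_reach[of "par v"] by (simp add: funpow_Suc_right del: funpow.simps)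
  hence "dep v \<le> Suc (dep (par v))" unfolding depth_def by (rule Least_le)
  thus ?thesis using le m by simp
qed

lemma dep_eq0_iff: "dep v = 0 \<longleftrightarrow> v = r"
  using dep_par by (cases "v = r") auto

lemma dep_induct:
  assumes "P r" "\<And>v. v \<noteq> r \<Longrightarrow> P (par v) \<Longrightarrow> P v"
  shows "P v"
proof -
  have "\<forall>v. dep v = n \<longrightarrow> P v" for n
  proof (induction n)
    case 0 then show ?case using assms(1) dep_eq0_iff by auto
  next
    case (Suc n)
    show ?case
    proof (intro allI impI)
      fix v assume "dep v = Suc n"
      hence "v \<noteq> r" by auto
      moreover have "dep (par v) = n" using dep_par[OF \<open>v \<noteq> r\<close>] \<open>dep v = Suc n\<close> by simp
      ultimately show "P v" using Suc assms(2) by blast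
    qed
  qed
  thus ?thesis by blast
qed

definition W :: "nat \<Rightarrow> 'v \<Rightarrow> real" where
  "W k v = real (dep v) * Pl k (real (dep v))"

lemma wdiff_eq: "wdiff r par k f v = W k v * Dif par f v"
  unfolding wdiff_def W_def Pl_def by simp

lemma W_pos: "v \<noteq> r \<Longrightarrow> W k v > 0"
  unfolding W_def using Pl_nat_ge1[of k "dep v"] dep_eq0_iff[of v]
  by (intro mult_pos_pos) auto

lemma W_ge1: "v \<noteq> r \<Longrightarrow> W k v \<ge> 1"
proof -
  assume "v \<noteq> r"
  hence "real (dep v) \<ge> 1" using dep_eq0_iff[of v] by simp
  hence "1 * 1 \<le> real (dep v) * Pl k (real (dep v))" using Pl_nat_ge1[of k "dep v"]
    by (intro mult_mono) auto
  thus ?thesis unfolding W_def by simp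
qed

lemma Dif_nonneg: "Dif par f v \<ge> 0" unfolding Dif_def by simp

lemma wdiff_nonneg: "wdiff r par k f v \<ge> 0"
  unfolding wdiff_def Dif_def using Pl_nat_ge1[of k "dep v"] unfolding Pl_def
  by (intro mult_nonneg_nonneg) auto

abbreviation S where "S k f \<equiv> Sup (insert 0 (wdiff r par k f ` (UNIV - {r})))"

lemma normk_eq: "normk r par k f = cmod (f r) + S k f"
  unfolding normk_def by simp

lemma S_ge: "f \<in> Lk r par k \<Longrightarrow> v \<noteq> r \<Longrightarrow> wdiff r par k f v \<le> S k f"
  unfolding Lk_def by (intro cSup_upper) auto

lemma S_nonneg: "f \<in> Lk r par k \<Longrightarrow> S k f \<ge> 0"
  unfolding Lk_def by (intro cSup_upper) auto

lemma S_le: "c \<ge> 0 \<Longrightarrow> (\<And>v. v \<noteq> r \<Longrightarrow> wdiff r par k f v \<le> c) \<Longrightarrow> S k f \<le> c"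
  by (intro cSup_least) auto

lemma Lk_I: "(\<And>v. v \<noteq> r \<Longrightarrow> wdiff r par k f v \<le> c) \<Longrightarrow> f \<in> Lk r par k"
  unfolding Lk_def bdd_above_def by auto

lemma normk_nonneg: "f \<in> Lk r par k \<Longrightarrow> normk r par k f \<ge> 0"
  using S_nonneg[of f k] normk_eq[of k f] by simp

lemma wdiff_le_normk: "f \<in> Lk r par k \<Longrightarrow> v \<noteq> r \<Longrightarrow> wdiff r par k f v \<le> normk r par k f"
  using S_ge[of f k v] normk_eq[of k f] norm_ge_zero[of "f r"] by linarith

lemma Dif_le: assumes "v \<noteq> r" "wdiff r par k f v \<le> c"
  shows "Dif par f v \<le> c / W k v"
  using assms W_pos[OF assms(1), of k] by (simp add: wdiff_eq field_simps mult.commute)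

lemma cmod_step: "cmod (f v) \<le> cmod (f (par v)) + Dif par f v"
  unfolding Dif_def by (metis norm_triangle_ineq2 add.commute diff_le_eq)

lemma growth_aux:
  assumes "k \<ge> 1" "f \<in> Lk r par k"
  shows "cmod (f v) \<le> cmod (f r) + S k f * ell k (real (dep v))"
proof (induction v rule: dep_induct)
  case 1
  show ?case using S_nonneg[OF assms(2)] by simp
next
  case (2 v)
  have S0: "S k f \<ge> 0" using S_nonneg[OF assms(2)] .
  have D: "Dif par f v \<le> S k f / W k v" using Dif_le[OF 2(1) S_ge[OF assms(2) 2(1)]] .
  show ?case
  proof (cases "par v = r")
    case True
    hence "dep v = 1" using dep_par[OF 2(1)] by simp
    hence "W k v = 1" unfolding W_def Pl_def by simp
    thus ?thesis using D cmod_step[of f v] True \<open>dep v = 1\<close> by simp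
  next
    case False
    define n where "n = dep (par v)"
    have n1: "n \<ge> 1" using False dep_eq0_iff n_def by (metis less_one not_le)
    have dv: "dep v = Suc n" using dep_par[OF 2(1)] n_def by simp
    have "S k f / W k v = S k f * (1 / (real (Suc n) * Pl k (real (Suc n))))"
      unfolding W_def dv by simp
    also have "\<dots> \<le> S k f * (ell k (real (Suc n)) - ell k (real n))"
      using ell_step_lower[OF n1 assms(1)] S0 by (intro mult_left_mono) auto
    finally have "Dif par f v \<le> S k f * (ell k (real (Suc n)) - ell k (real n))" using D by linarith
    thus ?thesis using cmod_step[of f v] 2(2) dv n_def by (simp add: algebra_simps)
  qed
qed

lemma growth:
  assumes "k \<ge> 1" "f \<in> Lk r par k"
  shows "cmod (f v) \<le> normk r par k f * ell k (real (dep v))"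
proof -
  have "cmod (f r) \<le> cmod (f r) * ell k (real (dep v))"
    using ell_nat_ge1[of k "dep v"] by (simp add: mult_le_cancel_left1)
  thus ?thesis using growth_aux[OF assms, of v] normk_eq[of k f] by (simp add: algebra_simps)
qed

end

lemma pow_bound_real:
  fixes a c L :: real
  assumes "a \<ge> 0" "c \<ge> 0" "L > 0" "\<And>n. a ^ n \<le> L * c ^ n"
  shows "a \<le> c"
proof (rule ccontr)
  assume "\<not> a \<le> c"
  hence ac: "c < a" by simp
  show False
  proof (cases "c = 0")
    case True
    thus False using assms(4)[of 1] ac by simp
  next
    case False
    hence cp: "c > 0" using assms(2) by simp
    have "1 < a / c" using ac cp by simp
    then obtain n where n: "L < (a / c) ^ n" using real_arch_pow by blast
    have "(a / c) ^ n = a ^ n / c ^ n" by (simp add: power_divide)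
    also have "\<dots> \<le> L" using assms(4)[of n] cp by (simp add: divide_le_eq)
    finally show False using n by simp
  qed
qed

context rt begin

lemma Lk0_iff: "f \<in> Lk0 r par k \<longleftrightarrow> f \<in> Lk r par k \<and>
   (\<forall>\<epsilon>>0. \<exists>N. \<forall>v. v \<noteq> r \<and> dep v \<ge> N \<longrightarrow> wdiff r par k f v < \<epsilon>)"
  unfolding Lk0_def by simp

lemma growth0:
  assumes k1: "k \<ge> 1" and f0: "f \<in> Lk0 r par k" and e: "\<epsilon> > 0"
  shows "\<exists>N. \<forall>v. dep v \<ge> N \<longrightarrow> cmod (f v) \<le> \<epsilon> * ell k (real (dep v))"
proof -
  have fL: "f \<in> Lk r par k" using f0 Lk0_iff by blast
  obtain N0 where N0: "\<And>v. v \<noteq> r \<Longrightarrow> dep v \<ge> N0 \<Longrightarrow> wdiff r par k f v < \<epsilon> / 2"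
    using f0 e unfolding Lk0_iff by (meson half_gt_zero)
  define N1 where "N1 = max N0 1"
  define A where "A = normk r par k f * ell k (real N1)"
  have claim: "\<forall>v. dep v = N1 + m \<longrightarrow>
     cmod (f v) \<le> A + \<epsilon> / 2 * (ell k (real (N1 + m)) - ell k (real N1))" for m
  proof (induction m)
    case 0 show ?case
    proof (intro allI impI)
      fix v assume "dep v = N1 + 0"
      thus "cmod (f v) \<le> A + \<epsilon> / 2 * (ell k (real (N1 + 0)) - ell k (real N1))"
        using growth[OF k1 fL, of v] unfolding A_def by simp
    qed
  next
    case (Suc m)
    show ?case
    proof (intro allI impI)
      fix v assume dv: "dep v = N1 + Suc m"
      hence vr: "v \<noteq> r" by auto
      have dp: "dep (par v) = N1 + m" using dep_par[OF vr] dv by simp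
      have "wdiff r par k f v \<le> \<epsilon> / 2" using N0[OF vr] dv N1_def by fastforce
      hence D: "Dif par f v \<le> (\<epsilon> / 2) / W k v" by (rule Dif_le[OF vr])
      have n1: "N1 + m \<ge> 1" using N1_def by simp
      have "(\<epsilon> / 2) / W k v = \<epsilon> / 2 * (1 / (real (Suc (N1 + m)) * Pl k (real (Suc (N1 + m)))))"
        unfolding W_def dv by simp
      also have "\<dots> \<le> \<epsilon> / 2 * (ell k (real (Suc (N1 + m))) - ell k (real (N1 + m)))"
        using ell_step_lower[OF n1 k1] e by (intro mult_left_mono) auto
      finally have "Dif par f v \<le> \<epsilon> / 2 * (ell k (real (Suc (N1 + m))) - ell k (real (N1 + m)))"
        using D by linarith
      thus "cmod (f v) \<le> A + \<epsilon> / 2 * (ell k (real (N1 + Suc m)) - ell k (real N1))"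
        using cmod_step[of f v] Suc[rule_format, OF dp] by (simp add: algebra_simps)
    qed
  qed
  have A0: "A \<ge> 0" unfolding A_def using normk_nonneg[OF fL] ell_nat_ge1[of k N1] by simp
  obtain N2 where N2: "\<And>n. n \<ge> N2 \<Longrightarrow> ell k (real n) \<ge> 2 * A / \<epsilon>"
    using ell_unbounded_nat[OF k1] by blast
  show ?thesis
  proof (intro exI allI impI)
    fix v assume "max N1 N2 \<le> dep v"
    then obtain m where m: "dep v = N1 + m" and "dep v \<ge> N2" by (metis le_Suc_ex max.bounded_iff)
    have "2 * A / \<epsilon> \<le> ell k (real (dep v))" using N2 \<open>dep v \<ge> N2\<close> by blast
    hence "A \<le> \<epsilon> / 2 * ell k (real (dep v))" using e by (simp add: field_simps)
    moreover have "ell k (real N1) \<ge> 0" using ell_nat_ge1[of k N1] by simp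
    hence "0 \<le> \<epsilon> / 2 * ell k (real N1)" using e by simp
    moreover have "\<epsilon> / 2 * (ell k (real (N1 + m)) - ell k (real N1)) = 
       \<epsilon> / 2 * ell k (real (dep v)) - \<epsilon> / 2 * ell k (real N1)" using m by (simp add: right_diff_distrib)
    ultimately show "cmod (f v) \<le> \<epsilon> * ell k (real (dep v))"
      using claim[rule_format, OF m] \<open>A \<le> \<epsilon> / 2 * ell k (real (dep v))\<close> by linarith
  qed
qed

lemma Dif_prod: "Dif par (\<lambda>u. \<psi> u * f u) v \<le> cmod (\<psi> v) * Dif par f v + cmod (f (par v)) * Dif par \<psi> v"
proof -
  have "\<psi> v * f v - \<psi> (par v) * f (par v) = \<psi> v * (f v - f (par v)) + f (par v) * (\<psi> v - \<psi> (par v))"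
    by (simp add: algebra_simps)
  hence "cmod (\<psi> v * f v - \<psi> (par v) * f (par v)) \<le> cmod (\<psi> v * (f v - f (par v))) + cmod (f (par v) * (\<psi> v - \<psi> (par v)))"
    by (metis norm_triangle_ineq)
  thus ?thesis unfolding Dif_def by (simp add: norm_mult)
qed

lemma Dif_prod_rev: "cmod (f v) * Dif par \<psi> v \<le> Dif par (\<lambda>u. \<psi> u * f u) v + cmod (\<psi> (par v)) * Dif par f v"
proof -
  have "f v * (\<psi> v - \<psi> (par v)) = (\<psi> v * f v - \<psi> (par v) * f (par v)) - \<psi> (par v) * (f v - f (par v))"
    by (simp add: algebra_simps)
  hence "cmod (f v * (\<psi> v - \<psi> (par v))) \<le> cmod (\<psi> v * f v - \<psi> (par v) * f (par v)) + cmod (\<psi> (par v) * (f v - f (par v)))"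
    by (metis norm_triangle_ineq4)
  thus ?thesis unfolding Dif_def by (simp add: norm_mult)
qed

lemma W_Suc: "W (Suc k) v = W k v * ell k (real (dep v))"
  unfolding W_def Pl_Suc by simp

lemma W_nonneg: "W k v \<ge> 0"
  unfolding W_def using Pl_nat_ge1[of k "dep v"] by simp

lemma supnorm_ge: fixes \<psi> :: "'v \<Rightarrow> complex" shows "\<psi> \<in> Linf \<Longrightarrow> cmod (\<psi> v) \<le> supnorm \<psi>"
  unfolding Linf_def supnorm_def by (auto intro: bounded_norm_le_SUP_norm)

lemma pointwise_mult:
  assumes psi: "\<psi> \<in> Linf" and vr: "v \<noteq> r"
  shows "wdiff r par k (\<lambda>u. \<psi> u * f u) v \<le> supnorm \<psi> * wdiff r par k f v
           + cmod (f (par v)) * (W k v * Dif par \<psi> v)"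
proof -
  have "wdiff r par k (\<lambda>u. \<psi> u * f u) v \<le> W k v * (cmod (\<psi> v) * Dif par f v + cmod (f (par v)) * Dif par \<psi> v)"
    unfolding wdiff_eq by (intro mult_left_mono Dif_prod W_nonneg)
  also have "\<dots> \<le> W k v * (supnorm \<psi> * Dif par f v + cmod (f (par v)) * Dif par \<psi> v)"
    using supnorm_ge[OF psi, of v] Dif_nonneg[of f v]
    by (intro mult_left_mono add_right_mono mult_right_mono W_nonneg) auto
  finally show ?thesis unfolding wdiff_eq by (simp add: algebra_simps)
qed

lemma par_weight:
  assumes "v \<noteq> r"
  shows "ell k (real (dep (par v))) * (W k v * Dif par \<psi> v) \<le> wdiff r par (Suc k) \<psi> v"
proof -
  have "ell k (real (dep (par v))) \<le> ell k (real (dep v))"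
    using dep_par[OF assms] by (intro ell_mono_nat) auto
  hence "ell k (real (dep (par v))) * (W k v * Dif par \<psi> v) \<le> ell k (real (dep v)) * (W k v * Dif par \<psi> v)"
    using W_nonneg[of k v] Dif_nonneg[of \<psi> v] by (intro mult_right_mono) auto
  thus ?thesis unfolding wdiff_eq W_Suc by (simp add: algebra_simps)
qed

lemma supnorm_nonneg: fixes \<psi> :: "'v \<Rightarrow> complex" shows "\<psi> \<in> Linf \<Longrightarrow> supnorm \<psi> \<ge> 0"
  using supnorm_ge[of \<psi> r] norm_ge_zero[of "\<psi> r"] by linarith

lemma mult_Lk:
  assumes k1: "k \<ge> 1" and psi: "\<psi> \<in> Linf" "\<psi> \<in> Lk r par (Suc k)" and f: "f \<in> Lk r par k"
  shows "(\<lambda>u. \<psi> u * f u) \<in> Lk r par k \<and>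
    normk r par k (\<lambda>u. \<psi> u * f u) \<le> (supnorm \<psi> + S (Suc k) \<psi>) * normk r par k f"
proof -
  define c where "c = supnorm \<psi> * S k f + normk r par k f * S (Suc k) \<psi>"
  have c0: "c \<ge> 0" unfolding c_def using supnorm_nonneg[OF psi(1)] S_nonneg[OF f] normk_nonneg[OF f] S_nonneg[OF psi(2)]
    by simp
  have pw: "wdiff r par k (\<lambda>u. \<psi> u * f u) v \<le> c" if vr: "v \<noteq> r" for v
  proof -
    have a: "supnorm \<psi> * wdiff r par k f v \<le> supnorm \<psi> * S k f"
      using S_ge[OF f vr] supnorm_nonneg[OF psi(1)] by (intro mult_left_mono)
    have "cmod (f (par v)) * (W k v * Dif par \<psi> v) \<le> normk r par k f * ell k (real (dep (par v))) * (W k v * Dif par \<psi> v)"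
      using growth[OF k1 f, of "par v"] W_nonneg[of k v] Dif_nonneg[of \<psi> v] by (intro mult_right_mono) auto
    also have "\<dots> \<le> normk r par k f * wdiff r par (Suc k) \<psi> v"
      using par_weight[OF vr, of k \<psi>] normk_nonneg[OF f] by (simp add: mult.assoc mult_left_mono)
    also have "\<dots> \<le> normk r par k f * S (Suc k) \<psi>"
      using S_ge[OF psi(2) vr] normk_nonneg[OF f] by (intro mult_left_mono)
    finally show ?thesis using pointwise_mult[OF psi(1) vr, of k f] a unfolding c_def by linarith
  qed
  have mem: "(\<lambda>u. \<psi> u * f u) \<in> Lk r par k" by (rule Lk_I[of _ _ c]) (rule pw)
  have "S k (\<lambda>u. \<psi> u * f u) \<le> c" by (rule S_le[OF c0 pw])
  moreover have "cmod (\<psi> r * f r) \<le> supnorm \<psi> * cmod (f r)"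
    using supnorm_ge[OF psi(1), of r] by (simp add: norm_mult mult_right_mono)
  ultimately have "normk r par k (\<lambda>u. \<psi> u * f u) \<le> supnorm \<psi> * cmod (f r) + c"
    unfolding normk_eq by simp
  also have "\<dots> = (supnorm \<psi> + S (Suc k) \<psi>) * normk r par k f"
    unfolding c_def normk_eq by (simp add: algebra_simps)
  finally show ?thesis using mem by blast
qed

lemma mult_Lk0:
  assumes k1: "k \<ge> 1" and psi: "\<psi> \<in> Linf" "\<psi> \<in> Lk r par (Suc k)" and f: "f \<in> Lk0 r par k"
  shows "(\<lambda>u. \<psi> u * f u) \<in> Lk0 r par k"
proof -
  have fL: "f \<in> Lk r par k" using f Lk0_iff by blast
  define a where "a = supnorm \<psi>"
  define b where "b = S (Suc k) \<psi>"
  have a0: "a \<ge> 0" unfolding a_def using supnorm_nonneg[OF psi(1)] .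
  have b0: "b \<ge> 0" unfolding b_def using S_nonneg[OF psi(2)] .
  have "\<exists>N. \<forall>v. v \<noteq> r \<and> dep v \<ge> N \<longrightarrow> wdiff r par k (\<lambda>u. \<psi> u * f u) v < \<eta>" if eta: "\<eta> > 0" for \<eta>
  proof -
    define e1 where "e1 = \<eta> / (2 * (a + 1))"
    define e2 where "e2 = \<eta> / (2 * (b + 1))"
    have e1: "e1 > 0" unfolding e1_def using eta a0 by simp
    have e2: "e2 > 0" unfolding e2_def using eta b0 by simp
    obtain N1 where N1: "\<And>v. v \<noteq> r \<Longrightarrow> dep v \<ge> N1 \<Longrightarrow> wdiff r par k f v < e1"
      using f e1 unfolding Lk0_iff by meson
    obtain N2 where N2: "\<And>v. dep v \<ge> N2 \<Longrightarrow> cmod (f v) \<le> e2 * ell k (real (dep v))"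
      using growth0[OF k1 f e2] by blast
    show ?thesis
    proof (intro exI allI impI)
      fix v assume v: "v \<noteq> r \<and> max N1 (Suc N2) \<le> dep v"
      hence vr: "v \<noteq> r" by blast
      have dp: "dep (par v) \<ge> N2" using v dep_par[OF vr] by simp
      have t1: "a * wdiff r par k f v \<le> a * e1"
        using N1[OF vr] v a0 by (intro mult_left_mono) auto
      have "a * e1 < \<eta> / 2" unfolding e1_def using a0 eta by (simp add: field_simps)
      have "cmod (f (par v)) * (W k v * Dif par \<psi> v) \<le> e2 * ell k (real (dep (par v))) * (W k v * Dif par \<psi> v)"
        using N2[OF dp] W_nonneg[of k v] Dif_nonneg[of \<psi> v] by (intro mult_right_mono) auto
      also have "\<dots> \<le> e2 * wdiff r par (Suc k) \<psi> v"
        using par_weight[OF vr, of k \<psi>] e2 by (simp add: mult.assoc mult_left_mono)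
      also have "\<dots> \<le> e2 * b" unfolding b_def using S_ge[OF psi(2) vr] e2 by (intro mult_left_mono) auto
      also have "\<dots> < \<eta> / 2" unfolding e2_def using b0 eta by (simp add: field_simps)
      finally show "wdiff r par k (\<lambda>u. \<psi> u * f u) v < \<eta>"
        using pointwise_mult[OF psi(1) vr, of k f] t1 \<open>a * e1 < \<eta> / 2\<close> unfolding a_def by linarith
    qed
  qed
  moreover have "(\<lambda>u. \<psi> u * f u) \<in> Lk r par k" using mult_Lk[OF k1 psi fL] by blast
  ultimately show ?thesis unfolding Lk0_iff by blast
qed

end

definition tf :: "'v \<Rightarrow> ('v \<Rightarrow> 'v) \<Rightarrow> nat \<Rightarrow> nat \<Rightarrow> 'v \<Rightarrow> complex" where
  "tf r par k N v = complex_of_real (ell k (real (min (depth r par v) N)))"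

context rt begin

lemma tf_wdiff:
  assumes vr: "v \<noteq> r"
  shows "wdiff r par k (tf r par k N) v \<le> 2 ^ Suc k \<and> (dep v > N \<longrightarrow> wdiff r par k (tf r par k N) v = 0)"
proof -
  define m where "m = dep (par v)"
  have dv: "dep v = Suc m" using dep_par[OF vr] m_def by simp
  have Dif_eq: "Dif par (tf r par k N) v = \<bar>ell k (real (min (Suc m) N)) - ell k (real (min m N))\<bar>"
    unfolding Dif_def tf_def dv m_def[symmetric] by (simp flip: of_real_diff)
  show ?thesis
  proof (cases "N \<le> m")
    case True
    hence "Dif par (tf r par k N) v = 0" using Dif_eq by simp
    thus ?thesis unfolding wdiff_eq by simp
  next
    case False
    hence nd: "\<not> dep v > N" using dv by simp
    have D: "Dif par (tf r par k N) v = \<bar>ell k (real (Suc m)) - ell k (real m)\<bar>"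
      using Dif_eq False by simp
    show ?thesis
    proof (cases "m = 0")
      case True
      thus ?thesis using D nd unfolding wdiff_eq by simp
    next
      case False
      hence m1: "m \<ge> 1" by simp
      have lo: "0 \<le> ell k (real (Suc m)) - ell k (real m)" using ell_mono_nat[of m "Suc m" k] by simp
      have up: "ell k (real (Suc m)) - ell k (real m) \<le> 1 / (real m * Pl k (real m))"
        by (rule ell_step_upper[OF m1])
      have Pp: "Pl k (real m) \<ge> 1" by (rule Pl_nat_ge1)
      have mp: "real m * Pl k (real m) > 0" using m1 Pp by simp
      have Wle: "W k v \<le> (2 * real m) * (2 ^ k * Pl k (real m))"
        unfolding W_def dv
        using Pl_step_le[OF m1, of k] m1 Pl_nat_ge1[of k "Suc m"] by (intro mult_mono) auto
      have "wdiff r par k (tf r par k N) v = W k v * (ell k (real (Suc m)) - ell k (real m))"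
        unfolding wdiff_eq D using lo by simp
      also have "\<dots> \<le> (2 * real m) * (2 ^ k * Pl k (real m)) * (1 / (real m * Pl k (real m)))"
        using Wle up lo W_nonneg[of k v] Pp by (intro mult_mono) auto
      also have "\<dots> = 2 ^ Suc k" using m1 Pp by (simp add: field_simps)
      finally show ?thesis using nd by simp
    qed
  qed
qed

lemma tf_Lk0: "tf r par k N \<in> Lk0 r par k"
  unfolding Lk0_iff
proof
  show "tf r par k N \<in> Lk r par k" by (rule Lk_I[of _ _ "2 ^ Suc k"]) (use tf_wdiff in blast)
  show "\<forall>\<epsilon>>0. \<exists>N'. \<forall>v. v \<noteq> r \<and> N' \<le> dep v \<longrightarrow> wdiff r par k (tf r par k N) v < \<epsilon>"
  proof (intro allI impI exI[of _ "Suc N"])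
    fix \<epsilon> :: real and v assume "\<epsilon> > 0" "v \<noteq> r \<and> Suc N \<le> dep v"
    thus "wdiff r par k (tf r par k N) v < \<epsilon>" using tf_wdiff[of v k N] by auto
  qed
qed

lemma Lk0_sub: "Lk0 r par k \<subseteq> Lk r par k"
  unfolding Lk0_def by blast

lemma tf_normk: "normk r par k (tf r par k N) \<le> 1 + 2 ^ Suc k"
proof -
  have "S k (tf r par k N) \<le> 2 ^ Suc k" by (rule S_le) (use tf_wdiff in auto)
  thus ?thesis unfolding normk_eq tf_def by simp
qed

lemma tf_val: "dep v = N \<Longrightarrow> tf r par k N v = complex_of_real (ell k (real (dep v)))"
  unfolding tf_def by simp

lemma const_wdiff: "wdiff r par k (\<lambda>v. c) v = 0"
  unfolding wdiff_eq Dif_def by simp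

lemma one_Lk0: "(\<lambda>v. 1) \<in> Lk0 r par k"
  unfolding Lk0_iff using const_wdiff by (auto intro: Lk_I[of _ _ 0])

lemma normk_const: "normk r par k (\<lambda>v. c) = cmod c"
proof -
  have "S k (\<lambda>v. c) \<le> 0" by (rule S_le) (auto simp: const_wdiff)
  moreover have "S k (\<lambda>v. c) \<ge> 0" by (rule S_nonneg) (auto intro: Lk_I[of _ _ 0] simp: const_wdiff)
  ultimately show ?thesis unfolding normk_eq by simp
qed

lemma normk_pos:
  assumes f: "f \<in> Lk r par k" and nz: "f \<noteq> (\<lambda>v. 0)"
  shows "normk r par k f > 0"
proof (rule ccontr)
  assume "\<not> normk r par k f > 0"
  hence "cmod (f r) + S k f \<le> 0" unfolding normk_eq by simp
  moreover have "S k f \<ge> 0" using S_nonneg[OF f] .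
  moreover have "cmod (f r) \<ge> 0" by simp
  ultimately have "cmod (f r) = 0" and S0: "S k f \<le> 0" by linarith+
  hence fr: "f r = 0" by simp
  have "f v = 0" for v
  proof (induction v rule: dep_induct)
    case 1 show ?case using fr .
  next
    case (2 v)
    have "wdiff r par k f v \<le> 0" using S_ge[OF f 2(1)] S0 by linarith
    hence "Dif par f v \<le> 0" using Dif_le[OF 2(1)] by fastforce
    hence "f v = f (par v)" using Dif_nonneg[of f v] unfolding Dif_def by simp
    thus ?case using 2(2) by simp
  qed
  thus False using nz by auto
qed

lemma power_bound:
  assumes k1: "k \<ge> 1" and X: "X \<subseteq> Lk r par k" and one: "(\<lambda>v. 1) \<in> X"
    and M: "\<And>f. f \<in> X \<Longrightarrow> (\<lambda>v. \<psi> v * f v) \<in> X \<and>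
               normk r par k (\<lambda>v. \<psi> v * f v) \<le> C * normk r par k f"
  shows "C \<ge> 0 \<and> (\<forall>v. cmod (\<psi> v) \<le> C)"
proof -
  have pX: "\<psi> \<in> X" using M[OF one] by simp
  have C0: "C \<ge> 0" using M[OF one] normk_nonneg[of \<psi> k] pX X normk_const[of k 1] by auto
  define pw where "pw n = (\<lambda>v. \<psi> v ^ n)" for n
  have pwn: "pw n \<in> X \<and> normk r par k (pw n) \<le> C ^ n" for n
  proof (induction n)
    case 0 show ?case using one normk_const[of k 1] unfolding pw_def by simp
  next
    case (Suc n)
    have e: "pw (Suc n) = (\<lambda>v. \<psi> v * pw n v)" unfolding pw_def by simp
    have "normk r par k (pw (Suc n)) \<le> C * normk r par k (pw n)" using M[of "pw n"] Suc e by simp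
    also have "\<dots> \<le> C * C ^ n" using Suc C0 by (intro mult_left_mono) auto
    finally show ?case using M[of "pw n"] Suc e by simp
  qed
  have "cmod (\<psi> v) \<le> C" for v
  proof (rule pow_bound_real[where L = "ell k (real (dep v))"])
    show "0 \<le> cmod (\<psi> v)" by simp
    show "0 \<le> C" by (rule C0)
    show "0 < ell k (real (dep v))" using ell_nat_ge1[of k "dep v"] by simp
    fix n
    have "cmod (pw n v) \<le> normk r par k (pw n) * ell k (real (dep v))"
      using growth[OF k1, of "pw n" v] pwn X by blast
    also have "\<dots> \<le> C ^ n * ell k (real (dep v))"
      using pwn ell_nat_ge1[of k "dep v"] by (intro mult_right_mono) auto
    finally show "cmod (\<psi> v) ^ n \<le> ell k (real (dep v)) * C ^ n"
      unfolding pw_def by (simp add: norm_power mult.commute)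
  qed
  thus ?thesis using C0 by blast
qed

lemma bounded_imp_c:
  assumes k1: "k \<ge> 1" and X: "X \<subseteq> Lk r par k" and one: "(\<lambda>v. 1) \<in> X"
    and tfX: "\<And>N. tf r par k N \<in> X" and mb: "mult_bounded_on X (normk r par k) \<psi>"
  shows "\<psi> \<in> Linf \<inter> Lk r par (Suc k)"
proof -
  obtain C where C: "\<And>f. f \<in> X \<Longrightarrow> normk r par k (\<lambda>v. \<psi> v * f v) \<le> C * normk r par k f"
    and cl: "\<And>f. f \<in> X \<Longrightarrow> (\<lambda>v. \<psi> v * f v) \<in> X"
    using mb unfolding mult_bounded_on_def by blast
  have pb: "C \<ge> 0 \<and> (\<forall>v. cmod (\<psi> v) \<le> C)"
    by (rule power_bound[OF k1 X one]) (use C cl in blast)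
  have Linf: "\<psi> \<in> Linf" unfolding Linf_def bounded_iff using pb by auto
  define K :: real where "K = 2 ^ Suc k"
  have K0: "K \<ge> 0" unfolding K_def by simp
  have "wdiff r par (Suc k) \<psi> v \<le> C * (1 + K) + C * K" if vr: "v \<noteq> r" for v
  proof -
    define g where "g = tf r par k (dep v)"
    have gX: "g \<in> X" unfolding g_def by (rule tfX)
    have gv: "cmod (g v) = ell k (real (dep v))"
      unfolding g_def using tf_val[of v "dep v" k] ell_nat_ge1[of k "dep v"] by simp
    have "wdiff r par (Suc k) \<psi> v = W k v * (cmod (g v) * Dif par \<psi> v)"
      unfolding wdiff_eq W_Suc gv by (simp add: algebra_simps)
    also have "\<dots> \<le> W k v * (Dif par (\<lambda>u. \<psi> u * g u) v + cmod (\<psi> (par v)) * Dif par g v)"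
      by (intro mult_left_mono Dif_prod_rev W_nonneg)
    also have "\<dots> = wdiff r par k (\<lambda>u. \<psi> u * g u) v + cmod (\<psi> (par v)) * wdiff r par k g v"
      unfolding wdiff_eq by (simp add: algebra_simps)
    also have "\<dots> \<le> C * (1 + K) + C * K"
    proof (rule add_mono)
      have "wdiff r par k (\<lambda>u. \<psi> u * g u) v \<le> normk r par k (\<lambda>u. \<psi> u * g u)"
        using wdiff_le_normk[OF _ vr] cl[OF gX] X by blast
      also have "\<dots> \<le> C * normk r par k g" by (rule C[OF gX])
      also have "\<dots> \<le> C * (1 + K)" unfolding g_def K_def using tf_normk pb by (intro mult_left_mono) auto
      finally show "wdiff r par k (\<lambda>u. \<psi> u * g u) v \<le> C * (1 + K)" .
      have "wdiff r par k g v \<le> K" unfolding g_def K_def using tf_wdiff[OF vr] by blast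
      thus "cmod (\<psi> (par v)) * wdiff r par k g v \<le> C * K"
        using pb wdiff_nonneg[of k g v] by (intro mult_mono) auto
    qed
    finally show ?thesis .
  qed
  hence "\<psi> \<in> Lk r par (Suc k)" by (intro Lk_I) auto
  thus ?thesis using Linf by blast
qed

end

context rt begin

lemma opnorm_bounds:
  assumes k1: "k \<ge> 1" and X: "X \<subseteq> Lk r par k" and one: "(\<lambda>v. 1) \<in> X"
    and M: "\<And>f. f \<in> X \<Longrightarrow> (\<lambda>v. \<psi> v * f v) \<in> X \<and>
               normk r par k (\<lambda>v. \<psi> v * f v) \<le> U * normk r par k f"
  shows "max (supnorm \<psi>) (normk r par k \<psi>) \<le> mult_opnorm X (normk r par k) \<psi>
       \<and> mult_opnorm X (normk r par k) \<psi> \<le> U"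
proof -
  define rat where "rat f = normk r par k (\<lambda>v. \<psi> v * f v) / normk r par k f" for f
  have opn: "mult_opnorm X (normk r par k) \<psi> = (SUP f\<in>X - {\<lambda>v. 0}. rat f)"
    unfolding mult_opnorm_def rat_def by simp
  have one_nz: "(\<lambda>v. 1::complex) \<noteq> (\<lambda>v. 0)" by (metis one_neq_zero)
  have ne: "X - {\<lambda>v. 0} \<noteq> {}" using one one_nz by blast
  have rat_le: "rat f \<le> U" if f: "f \<in> X - {\<lambda>v. 0}" for f
  proof -
    have p: "normk r par k f > 0" using normk_pos[of f k] f X by blast
    show ?thesis unfolding rat_def using M[of f] f p by (simp add: pos_divide_le_eq)
  qed
  have bdd: "bdd_above (rat ` (X - {\<lambda>v. 0}))" by (rule bdd_aboveI2[of _ _ U]) (rule rat_le)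
  have up: "mult_opnorm X (normk r par k) \<psi> \<le> U" unfolding opn
    by (rule cSUP_least[OF ne rat_le])
  have "rat (\<lambda>v. 1) = normk r par k \<psi>" unfolding rat_def normk_const by simp
  hence lo1: "normk r par k \<psi> \<le> mult_opnorm X (normk r par k) \<psi>"
    unfolding opn using cSUP_upper[OF _ bdd, of "\<lambda>v. 1"] one one_nz by fastforce
  define Mo where "Mo = mult_opnorm X (normk r par k) \<psi>"
  have pX: "\<psi> \<in> X" using M[OF one] by simp
  have Mo0: "Mo \<ge> 0" using lo1 normk_nonneg[of \<psi> k] pX X unfolding Mo_def by auto
  have MM: "(\<lambda>v. \<psi> v * f v) \<in> X \<and> normk r par k (\<lambda>v. \<psi> v * f v) \<le> Mo * normk r par k f"
    if f: "f \<in> X" for f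
  proof (cases "f = (\<lambda>v. 0)")
    case True
    thus ?thesis using M[OF f] normk_const[of k 0] by simp
  next
    case False
    have p: "normk r par k f > 0" using normk_pos[of f k] f X False by blast
    have "rat f \<le> Mo" unfolding Mo_def opn using cSUP_upper[OF _ bdd, of f] f False by blast
    thus ?thesis using M[OF f] p unfolding rat_def by (simp add: pos_divide_le_eq)
  qed
  have "\<forall>v. cmod (\<psi> v) \<le> Mo" using power_bound[OF k1 X one MM] by blast
  hence "supnorm \<psi> \<le> Mo" unfolding supnorm_def by (intro cSUP_least) auto
  thus ?thesis using lo1 up unfolding Mo_def by simp
qed

lemma c_imp_mult:
  assumes k1: "k \<ge> 1" and c: "\<psi> \<in> Linf \<inter> Lk r par (Suc k)" and X: "X \<in> {Lk r par k, Lk0 r par k}"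
    and f: "f \<in> X"
  shows "(\<lambda>v. \<psi> v * f v) \<in> X \<and>
     normk r par k (\<lambda>v. \<psi> v * f v) \<le> (supnorm \<psi> + S (Suc k) \<psi>) * normk r par k f"
proof -
  have fL: "f \<in> Lk r par k" using X f Lk0_sub by blast
  have a: "(\<lambda>v. \<psi> v * f v) \<in> Lk r par k \<and>
     normk r par k (\<lambda>v. \<psi> v * f v) \<le> (supnorm \<psi> + S (Suc k) \<psi>) * normk r par k f"
    using mult_Lk[OF k1 _ _ fL] c by blast
  show ?thesis
  proof (cases "X = Lk r par k")
    case True thus ?thesis using a by simp
  next
    case False
    hence "X = Lk0 r par k" using X by blast
    thus ?thesis using a mult_Lk0[OF k1 _ _ ] c f by blast
  qed
qed

end

lemma prod_shift_ell: "(\<Prod>j\<in>{1..k}. ell j x) = (\<Prod>j<Suc k. ell j x)"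
proof -
  have "{..<Suc k} = insert 0 {1..k}" by auto
  thus ?thesis by simp
qed

theorem theorem3p1:
  fixes r :: 'v and par :: "'v \<Rightarrow> 'v" and k :: nat and \<psi> :: "'v \<Rightarrow> complex"
  assumes "rooted_tree r par" and "k \<ge> 1"
  shows "(mult_bounded_on (Lk r par k) (normk r par k) \<psi>
            \<longleftrightarrow> mult_bounded_on (Lk0 r par k) (normk r par k) \<psi>)
       \<and> (mult_bounded_on (Lk0 r par k) (normk r par k) \<psi>
            \<longleftrightarrow> \<psi> \<in> Linf \<inter> Lk r par (Suc k))
       \<and> (\<psi> \<in> Linf \<inter> Lk r par (Suc k) \<longrightarrow>
           (\<forall>X \<in> {Lk r par k, Lk0 r par k}.
              max (supnorm \<psi>) (normk r par k \<psi>) \<le> mult_opnorm X (normk r par k) \<psi>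
            \<and> mult_opnorm X (normk r par k) \<psi>
                \<le> supnorm \<psi> + Sup (insert 0 ((\<lambda>v. real (depth r par v)
                     * (\<Prod>j\<in>{1..k}. ell j (real (depth r par v))) * Dif par \<psi> v)
                     ` (UNIV - {r})))))"
proof -
  have "rt r par" using assms(1) unfolding rooted_tree_def rt_def by blast
  interpret rt r par by fact
  note k1 = assms(2)
  have Seq: "(\<lambda>v. real (depth r par v) * (\<Prod>j\<in>{1..k}. ell j (real (depth r par v))) * Dif par \<psi> v)
      = wdiff r par (Suc k) \<psi>"
    unfolding wdiff_def prod_shift_ell by simp
  define U where "U = supnorm \<psi> + Sup (insert 0 (wdiff r par (Suc k) \<psi> ` (UNIV - {r})))"
  have cX: "mult_bounded_on X (normk r par k) \<psi>"
    if c: "\<psi> \<in> Linf \<inter> Lk r par (Suc k)" and X: "X \<in> {Lk r par k, Lk0 r par k}" for X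
    unfolding mult_bounded_on_def using c_imp_mult[OF k1 c X] by blast
  have Xc1: "\<psi> \<in> Linf \<inter> Lk r par (Suc k)" if "mult_bounded_on (Lk r par k) (normk r par k) \<psi>"
    by (rule bounded_imp_c[OF k1 _ _ _ that]) (use Lk0_sub one_Lk0 tf_Lk0 in blast)+
  have Xc0: "\<psi> \<in> Linf \<inter> Lk r par (Suc k)" if "mult_bounded_on (Lk0 r par k) (normk r par k) \<psi>"
    by (rule bounded_imp_c[OF k1 _ _ _ that]) (use Lk0_sub one_Lk0 tf_Lk0 in blast)+
  have norms: "\<forall>X \<in> {Lk r par k, Lk0 r par k}.
              max (supnorm \<psi>) (normk r par k \<psi>) \<le> mult_opnorm X (normk r par k) \<psi>
            \<and> mult_opnorm X (normk r par k) \<psi> \<le> U"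
    if c: "\<psi> \<in> Linf \<inter> Lk r par (Suc k)"
  proof
    fix X assume X: "X \<in> {Lk r par k, Lk0 r par k}"
    show "max (supnorm \<psi>) (normk r par k \<psi>) \<le> mult_opnorm X (normk r par k) \<psi>
            \<and> mult_opnorm X (normk r par k) \<psi> \<le> U"
    proof (rule opnorm_bounds[OF k1])
      show "X \<subseteq> Lk r par k" using X Lk0_sub by blast
      show "(\<lambda>v. 1) \<in> X" using X one_Lk0 Lk0_sub by blast
      fix f assume "f \<in> X"
      thus "(\<lambda>v. \<psi> v * f v) \<in> X \<and> normk r par k (\<lambda>v. \<psi> v * f v) \<le> U * normk r par k f"
        using c_imp_mult[OF k1 c X] unfolding U_def by blast
    qed
  qed
  show ?thesis unfolding Seq U_def[symmetric]
    using cX Xc1 Xc0 norms by blast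
qed

end
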